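(* Let $\ell\in\mathbb{N}$, $\alpha_j,\beta_j\in\mathbb{N}$ for $j=1,\dots,\ell$, and $q\in\mathbb{C}$ with $|q|<1$. Then $$\mathbf{R}^{\alpha_1}\big[\mathbf{y}^{\beta_1}\cdots\mathbf{R}^{\alpha_\ell}[\mathbf{y}^{\beta_\ell}]\cdots\big](1)=\mathbf{R}^{\beta_\ell}\big[\mathbf{y}^{\alpha_\ell}\mathbf{R}^{\beta_{\ell-1}}[\mathbf{y}^{\alpha_{\ell-1}}\cdots\mathbf{R}^{\beta_1}[\mathbf{y}^{\alpha_1}]\cdots]\big](1),$$ where both sides mean the value at $t=1$ of the corresponding power series in $t$.
   Context: $\mathbf{y}(t)=\frac{t}{1-t}$ and $\mathbf{y}^{\beta}$ denotes multiplication by $\mathbf{y}(t)^\beta$. $\mathbf{R}$ is the operator $\mathbf{R}[f](t)=\sum_{k\ge1}f(q^kt)$ on power series in $t$ without constant term, and $\mathbf{R}^n$ its $n$-fold composition. *)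

theory Defs
  imports Complex_Main "HOL-Computational_Algebra.Formal_Power_Series"
begin

text \<open>y(t) = t/(1-t) = sum_{n>=1} t^n as a formal power series.\<close>
definition yfps :: "complex fps" where
  "yfps = Abs_fps (\<lambda>n. if n = 0 then 0 else 1)"

text \<open>R[f](t) = sum_{k>=1} f(q^k t): the coefficient of t^n is
  sum_{k>=1} (q^k)^n * f_n (f is assumed to have no constant term).\<close>
definition Rop :: "complex \<Rightarrow> complex fps \<Rightarrow> complex fps" where
  "Rop q f = Abs_fps (\<lambda>n. (\<Sum>k. (q ^ (Suc k)) ^ n * fps_nth f n))"

fun nestR :: "complex \<Rightarrow> (nat \<times> nat) list \<Rightarrow> complex fps" where
  "nestR q [] = 1"
| "nestR q ((a, b) # rest) = (Rop q ^^ a) (yfps ^ b * nestR q rest)"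

definition eval_at_1 :: "complex fps \<Rightarrow> complex" where
  "eval_at_1 f = (\<Sum>n. fps_nth f n)"

end

theory Submission
  imports Defs "HOL-Analysis.Analysis" "HOL-Real_Asymp.Real_Asymp"
begin


lemma poly_geom:
  fixes x :: real
  assumes "0 \<le> x" "x < 1"
  shows "summable (\<lambda>n. (real n + 1)^p * x^n)"
proof (cases "x = 0")
  case True
  have "(\<lambda>n. (real n + 1)^p * x^n) = (\<lambda>n. if n = 0 then 1 else 0)"
    using True by (auto simp: fun_eq_iff)
  then show ?thesis by (simp add: summable_single[of 0 "\<lambda>_. 1::real", simplified])
next
  case False
  then have xp: "x > 0" using assms by auto
  define c where "c = (1 + x) / 2"
  have c1: "c < 1" using assms by (simp add: c_def)
  have lim0: "(\<lambda>n. (real n + 2)/(real n + 1)) \<longlonglongrightarrow> 1" by real_asymp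
  have lim: "(\<lambda>n. ((real n + 2)/(real n + 1))^p) \<longlonglongrightarrow> 1"
    using tendsto_power[OF lim0, of p] by simp
  have "1 < (1+x)/(2*x)" using xp assms by (simp add: field_simps)
  from order_tendstoD(2)[OF lim this] obtain N where
    N: "\<And>n. n \<ge> N \<Longrightarrow> ((real n + 2)/(real n + 1))^p < (1+x)/(2*x)"
    by (auto simp: eventually_sequentially)
  show ?thesis
  proof (rule summable_ratio_test[OF c1, of N])
    fix n assume "n \<ge> N"
    note h = N[OF this]
    have e0: "real (Suc n) + 1 = ((real n + 2)/(real n + 1)) * (real n + 1)"
      by (simp add: field_simps)
    have e: "(real (Suc n) + 1)^p = ((real n + 2)/(real n + 1))^p * (real n + 1)^p"
      using e0 by (metis power_mult_distrib)
    have "(real (Suc n) + 1)^p * x^(Suc n) = (((real n + 2)/(real n + 1))^p * x) * ((real n + 1)^p * x^n)"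
      unfolding e power_Suc by (simp only: mult_ac)
    also have "\<dots> \<le> c * ((real n + 1)^p * x^n)"
    proof (rule mult_right_mono)
      have "((real n + 2)/(real n + 1))^p * x \<le> (1+x)/(2*x) * x"
        using h xp by (intro mult_right_mono) auto
      also have "\<dots> = c" using xp by (simp add: c_def)
      finally show "((real n + 2)/(real n + 1))^p * x \<le> c" .
    qed (use assms in auto)
    finally show "norm ((real (Suc n) + 1)^p * x^(Suc n)) \<le> c * norm ((real n + 1)^p * x^n)"
      using assms by simp
  qed
qed

lemma prod_summable:
  fixes F :: "nat \<times> nat \<Rightarrow> complex"
  assumes b: "\<And>x y. norm (F (x,y)) \<le> A x * B y" and sA: "summable A" and sB: "summable B"
    and A0: "\<And>x. 0 \<le> A x" and B0: "\<And>y. 0 \<le> B y"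
  shows "F summable_on UNIV"
proof -
  have r: "((\<lambda>y. A x * B y) has_sum (A x * suminf B)) UNIV" for x
    by (rule sums_nonneg_imp_has_sum) (use sums_mult[OF summable_sums[OF sB]] A0 B0 in auto)
  have g: "(\<lambda>x. A x * suminf B) summable_on UNIV"
    using summable_on_UNIV_nonneg_real_iff[of "\<lambda>x. A x * suminf B"] A0 B0 sA sB
    by (simp add: summable_mult2 suminf_nonneg)
  define P where "P = (\<lambda>p::nat\<times>nat. A (fst p) * B (snd p))"
  have "P summable_on Sigma UNIV (\<lambda>_. UNIV)"
    by (rule summable_on_SigmaI[OF _ g]) (use r A0 B0 in \<open>auto simp: P_def\<close>)
  then have "(\<lambda>p. norm (P p)) summable_on UNIV"
    using A0 B0 by (simp add: abs_mult P_def)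
  then have "(\<lambda>p. norm (F p)) summable_on UNIV"
    by (rule summable_on_comparison_test) (use b A0 B0 in \<open>auto simp: abs_mult P_def\<close>)
  then show ?thesis by (simp add: summable_on_iff_abs_summable_on_complex)
qed

lemma rows_sums:
  fixes F :: "nat \<times> nat \<Rightarrow> complex"
  assumes s: "F summable_on UNIV" and r: "\<And>x. (\<lambda>y. F (x,y)) sums g x"
  shows "g sums infsum F UNIV"
proof -
  have s': "F summable_on Sigma UNIV (\<lambda>_. UNIV)" using s by simp
  have "(\<lambda>y. F (x,y)) summable_on UNIV" for x
    using summable_on_SigmaD1[of "\<lambda>x y. F (x,y)" UNIV "\<lambda>_. UNIV" x] s' by simp
  then have rows: "((\<lambda>y. F (x,y)) has_sum g x) UNIV" for x
    by (metis has_sum_imp_sums has_sum_infsum r sums_unique2)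
  have "(g has_sum infsum F UNIV) UNIV"
    using has_sum_SigmaD[where f=F and A=UNIV and B="\<lambda>_. UNIV" and g=g] rows has_sum_infsum[OF s]
    by auto
  then show ?thesis by (rule has_sum_imp_sums)
qed

lemma cols_sums:
  fixes F :: "nat \<times> nat \<Rightarrow> complex"
  assumes s: "F summable_on UNIV" and r: "\<And>y. (\<lambda>x. F (x,y)) sums h y"
  shows "h sums infsum F UNIV"
proof -
  have bij: "bij_betw prod.swap (UNIV::(nat\<times>nat) set) UNIV" by (simp add: bij_swap)
  have s2: "(\<lambda>p. F (prod.swap p)) summable_on UNIV"
    using summable_on_reindex_bij_betw[OF bij, of F] s by simp
  have "h sums infsum (\<lambda>p. F (prod.swap p)) UNIV"
    by (rule rows_sums[OF s2]) (use r in simp)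
  also have "infsum (\<lambda>p. F (prod.swap p)) UNIV = infsum F UNIV"
    by (rule infsum_reindex_bij_betw[OF bij])
  finally show ?thesis .
qed

lemma diag_sums:
  fixes F :: "nat \<times> nat \<Rightarrow> complex"
  assumes s: "F summable_on UNIV"
  shows "(\<lambda>n. \<Sum>m\<le>n. F (n-m, m)) sums infsum F UNIV"
proof -
  have "((\<lambda>p. F ((\<lambda>(n,m). (n-m, m)) p)) has_sum infsum F UNIV) (Sigma UNIV (\<lambda>n. {..n}))
      = (F has_sum infsum F UNIV) UNIV"
    by (rule has_sum_reindex_bij_witness[where i="\<lambda>(k,m). (k+m, m)" and j="\<lambda>(n,m). (n-m, m)"]) auto
  then have "((\<lambda>p. F ((\<lambda>(n,m). (n-m, m)) p)) has_sum infsum F UNIV) (Sigma UNIV (\<lambda>n. {..n}))"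
    using has_sum_infsum[OF s] by simp
  then have "((\<lambda>n. \<Sum>m\<le>n. F (n-m, m)) has_sum infsum F UNIV) UNIV"
    by (rule has_sum_SigmaD) auto
  then show ?thesis by (rule has_sum_imp_sums)
qed



definition cc :: "complex \<Rightarrow> nat \<Rightarrow> complex" where "cc q n = q^n / (1 - q^n)"
abbreviation YY :: "nat \<Rightarrow> nat \<Rightarrow> complex" where "YY b \<equiv> fps_nth (yfps ^ b)"
abbreviation VV :: "complex \<Rightarrow> (nat \<times> nat) list \<Rightarrow> nat \<Rightarrow> complex" where "VV q L \<equiv> fps_nth (nestR q L)"
definition valid :: "(nat \<times> nat) list \<Rightarrow> bool" where
  "valid L = (\<forall>p\<in>set L. 1 \<le> fst p \<and> 1 \<le> snd p)"

lemma yfps_nth: "fps_nth yfps n = (if n = 0 then 0 else 1)" by (simp add: yfps_def)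

lemma YY_0: "1 \<le> b \<Longrightarrow> YY b 0 = 0"
  by (simp add: fps_power_zeroth yfps_nth)

lemma conv_bound:
  fixes f g :: "nat \<Rightarrow> complex"
  assumes f: "\<And>n. norm (f n) \<le> A * (real n + 1)^p" and g: "\<And>n. norm (g n) \<le> B * (real n + 1)^s"
  shows "norm (\<Sum>i=0..n. f i * g (n-i)) \<le> A * B * (real n + 1)^(p+s+1)"
proof -
  have A0: "A \<ge> 0" using order_trans[OF norm_ge_zero f[of 0]] by simp
  have B0: "B \<ge> 0" using order_trans[OF norm_ge_zero g[of 0]] by simp
  have "norm (\<Sum>i=0..n. f i * g (n-i)) \<le> (\<Sum>i=0..n. norm (f i) * norm (g (n-i)))"
    by (rule order_trans[OF norm_sum]) (simp add: norm_mult)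
  also have "\<dots> \<le> (\<Sum>i=0..n. (A * (real n + 1)^p) * (B * (real n + 1)^s))"
  proof (rule sum_mono)
    fix i assume i: "i \<in> {0..n}"
    have "norm (f i) \<le> A * (real n + 1)^p"
      by (rule order_trans[OF f[of i]]) (use i A0 in \<open>auto intro!: mult_left_mono power_mono\<close>)
    moreover have "norm (g (n-i)) \<le> B * (real n + 1)^s"
      by (rule order_trans[OF g[of "n-i"]]) (use i B0 in \<open>auto intro!: mult_left_mono power_mono\<close>)
    ultimately show "norm (f i) * norm (g (n-i)) \<le> (A * (real n + 1)^p) * (B * (real n + 1)^s)"
      using A0 B0 by (intro mult_mono) auto
  qed
  also have "\<dots> = A * B * (real n + 1)^(p+s+1)"
    by (simp add: power_add algebra_simps)
  finally show ?thesis .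
qed

lemma YY_bound: "norm (YY b n) \<le> (real n + 1)^b"
proof (induction b arbitrary: n)
  case 0
  then show ?case by simp
next
  case (Suc b)
  have "YY (Suc b) n = (\<Sum>i=0..n. fps_nth yfps i * YY b (n-i))"
    by (simp add: fps_mult_nth)
  also have "norm \<dots> \<le> 1 * 1 * (real n + 1)^(0 + b + 1)"
    by (rule conv_bound) (use Suc in \<open>auto simp: yfps_nth\<close>)
  finally show ?case by simp
qed

lemma YY_summable: "norm x < 1 \<Longrightarrow> summable (\<lambda>n. norm (YY b n * x^n))"
  by (rule summable_comparison_test[OF _ poly_geom[of "norm x" b]])
     (auto simp: norm_mult norm_power intro!: mult_right_mono YY_bound exI[of _ 0])

lemma y_sums: "norm x < 1 \<Longrightarrow> (\<lambda>n. fps_nth yfps n * x^n) sums (x/(1-x))"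
proof -
  assume x: "norm x < 1"
  have "(\<lambda>n. x^n - (if n = 0 then 1 else 0)) sums (1/(1-x) - 1)"
    using sums_diff[OF geometric_sums[OF x] sums_single[of 0 "\<lambda>_. 1::complex"]] by simp
  moreover have "1 - x \<noteq> 0" using x by auto
  then have "1/(1-x) - 1 = x/(1-x)" by (simp add: field_simps)
  moreover have "(\<lambda>n. fps_nth yfps n * x^n) = (\<lambda>n. x^n - (if n = 0 then 1 else 0))"
    by (auto simp: yfps_nth fun_eq_iff)
  ultimately show ?thesis by simp
qed

lemma Y_eval: "norm x < 1 \<Longrightarrow> (\<lambda>n. YY b n * x^n) sums (x/(1-x))^b"
proof (induction b)
  case 0
  have "(\<lambda>n. (if n = 0 then 1 else 0) * x^n) = (\<lambda>n. if n = 0 then (1::complex) else 0)"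
    by (auto simp: fun_eq_iff)
  then show ?case using sums_single[of 0 "\<lambda>_. 1::complex"] by simp
next
  case (Suc b)
  have s1: "summable (\<lambda>n. norm (fps_nth yfps n * x^n))"
    using YY_summable[OF Suc.prems, of 1] by simp
  have c: "(\<lambda>k. \<Sum>i\<le>k. (fps_nth yfps i * x^i) * (YY b (k-i) * x^(k-i))) sums
      ((\<Sum>k. fps_nth yfps k * x^k) * (\<Sum>k. YY b k * x^k))"
    by (rule Cauchy_product_sums[OF s1 YY_summable[OF Suc.prems]])
  have e: "(\<Sum>i\<le>k. (fps_nth yfps i * x^i) * (YY b (k-i) * x^(k-i))) = YY (Suc b) k * x^k" for k
  proof -
    have "(\<Sum>i\<le>k. (fps_nth yfps i * x^i) * (YY b (k-i) * x^(k-i))) = (\<Sum>i=0..k. fps_nth yfps i * YY b (k-i) * x^k)"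
    proof (unfold atLeast0AtMost, rule sum.cong[OF refl])
      fix i assume "i \<in> {..k}"
      then have "x^i * x^(k-i) = x^k" by (simp flip: power_add)
      then show "(fps_nth yfps i * x^i) * (YY b (k-i) * x^(k-i)) = fps_nth yfps i * YY b (k-i) * x^k"
        by (metis mult.assoc mult.left_commute)
    qed
    also have "\<dots> = YY (Suc b) k * x^k" by (simp add: fps_mult_nth sum_distrib_right)
    finally show ?thesis .
  qed
  have i1: "(\<Sum>k. YY b k * x^k) = (x/(1-x))^b" using sums_unique[OF Suc.IH[OF Suc.prems]] by simp
  have i2: "(\<Sum>k. fps_nth yfps k * x^k) = x/(1-x)" using sums_unique[OF y_sums[OF Suc.prems]] by simp
  show ?case using c unfolding e i1 i2 by simp
qed



lemma normq_pow_lt: "norm (q::complex) < 1 \<Longrightarrow> n \<ge> 1 \<Longrightarrow> norm (q^n) < 1"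
proof -
  assume q: "norm q < 1" and n: "n \<ge> 1"
  have "norm q ^ n \<le> norm q ^ 1" by (rule power_decreasing[OF n]) (use q in auto)
  then show ?thesis using q by (simp add: norm_power)
qed

lemma Rop_nth:
  assumes f0: "fps_nth f 0 = 0" and q: "norm q < 1"
  shows "fps_nth (Rop q f) n = cc q n * fps_nth f n"
proof (cases "n = 0")
  case True
  then show ?thesis by (simp add: Rop_def f0 cc_def)
next
  case False
  have x: "norm (q^n) < 1" using normq_pow_lt[OF q, of n] False by simp
  have "(\<lambda>k. q^n * (q^n)^k * fps_nth f n) sums (q^n * (1/(1-q^n)) * fps_nth f n)"
    by (intro sums_mult sums_mult2 geometric_sums x)
  moreover have "(\<lambda>k. (q ^ (Suc k)) ^ n * fps_nth f n) = (\<lambda>k. q^n * (q^n)^k * fps_nth f n)"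
  proof
    fix k
    have "(q ^ k) ^ n = (q^n)^k" by (metis mult.commute power_mult)
    then show "(q ^ (Suc k)) ^ n * fps_nth f n = q^n * (q^n)^k * fps_nth f n"
      by (simp add: power_mult_distrib)
  qed
  ultimately have "(\<lambda>k. (q ^ (Suc k)) ^ n * fps_nth f n) sums (cc q n * fps_nth f n)"
    by (simp add: cc_def)
  then show ?thesis by (simp add: Rop_def sums_iff)
qed

lemma Rop_pow_nth:
  assumes f0: "fps_nth f 0 = 0" and q: "norm q < 1"
  shows "fps_nth ((Rop q ^^ a) f) n = cc q n ^ a * fps_nth f n"
proof (induction a arbitrary: n)
  case 0
  then show ?case by simp
next
  case (Suc a)
  have z: "fps_nth ((Rop q ^^ a) f) 0 = 0" using Suc[of 0] f0 by simp
  show ?case using Rop_nth[OF z q, of n] Suc[of n] by simp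
qed

lemma V_cons:
  assumes "1 \<le> b" "norm q < 1"
  shows "VV q ((a,b)#L) n = cc q n ^ a * (\<Sum>i=0..n. YY b i * VV q L (n-i))"
proof -
  have "fps_nth (yfps ^ b * nestR q L) 0 = 0" using YY_0[OF assms(1)] by simp
  from Rop_pow_nth[OF this assms(2)] show ?thesis by (simp add: fps_mult_nth)
qed

lemma cc_bound:
  assumes a: "1 \<le> a" and q: "norm q < 1"
  shows "norm (cc q n ^ a) \<le> norm q ^ n / (1 - norm q)^a"
proof (cases "n = 0")
  case True
  then show ?thesis using a q by (simp add: cc_def zero_power)
next
  case False
  let ?r = "norm q"
  have r0: "0 \<le> ?r" by simp
  have "?r^n \<le> ?r^1" by (rule power_decreasing) (use False q in auto)
  then have "1 - ?r \<le> 1 - ?r^n" by simp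
  also have "1 - ?r^n \<le> norm (1 - q^n)"
    using norm_triangle_ineq2[of 1 "q^n"] by (simp add: norm_power)
  finally have d: "1 - ?r \<le> norm (1 - q^n)" .
  have d0: "0 < 1 - ?r" using q by simp
  have "norm (cc q n) = ?r^n / norm (1 - q^n)" by (simp add: cc_def norm_divide norm_power)
  also have "\<dots> \<le> ?r^n / (1 - ?r)"
    by (rule divide_left_mono) (use d d0 in \<open>auto intro!: mult_pos_pos\<close>)
  finally have c1: "norm (cc q n) \<le> ?r^n / (1 - ?r)" .
  have "norm (cc q n ^ a) \<le> (?r^n / (1 - ?r))^a"
    unfolding norm_power by (rule power_mono[OF c1]) simp
  also have "\<dots> = (?r^n)^a / (1 - ?r)^a" by (simp add: power_divide)
  also have "\<dots> \<le> ?r^n / (1 - ?r)^a"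
  proof (rule divide_right_mono)
    have "(?r^n)^a \<le> (?r^n)^1" by (rule power_decreasing) (use a q in \<open>auto intro: power_le_one\<close>)
    then show "(?r^n)^a \<le> ?r^n" by simp
  qed (use d0 in auto)
  finally show ?thesis .
qed

lemma valid_cons: "valid ((a,b)#L) \<longleftrightarrow> 1 \<le> a \<and> 1 \<le> b \<and> valid L"
  by (auto simp: valid_def)

lemma V_bound:
  assumes "valid L" and q: "norm q < 1"
  shows "\<exists>C p. C \<ge> 0 \<and> (\<forall>n. norm (VV q L n) \<le> C * (real n + 1)^p * norm q ^ n)"
  using assms(1)
proof (induction L)
  case Nil
  show ?case by (intro exI[of _ 1] exI[of _ 0]) auto
next
  case (Cons ab L)
  obtain a b where ab: "ab = (a,b)" by force
  with Cons.prems have a: "1 \<le> a" and b: "1 \<le> b" and vL: "valid L" by (auto simp: valid_cons)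
  obtain C p where C0: "C \<ge> 0" and C: "\<And>n. norm (VV q L n) \<le> C * (real n + 1)^p * norm q ^ n"
    using Cons.IH[OF vL] by blast
  have C': "norm (VV q L n) \<le> C * (real n + 1)^p" for n
  proof -
    have "norm q ^ n \<le> 1" using q by (simp add: power_le_one)
    then have "C * (real n + 1)^p * norm q ^ n \<le> C * (real n + 1)^p * 1"
      using C0 by (intro mult_left_mono) auto
    then show ?thesis using C[of n] by simp
  qed
  have w: "norm (\<Sum>i=0..n. YY b i * VV q L (n-i)) \<le> 1 * C * (real n + 1)^(b+p+1)" for n
    by (rule conv_bound) (use YY_bound C' in auto)
  have "norm (VV q (ab#L) n) \<le> (C / (1 - norm q)^a) * (real n + 1)^(b+p+1) * norm q ^ n" for n
  proof -
    have "norm (VV q (ab#L) n) = norm (cc q n ^ a) * norm (\<Sum>i=0..n. YY b i * VV q L (n-i))"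
      unfolding ab V_cons[OF b q] norm_mult ..
    also have "\<dots> \<le> (norm q ^ n / (1 - norm q)^a) * (1 * C * (real n + 1)^(b+p+1))"
      by (rule mult_mono[OF cc_bound[OF a q] w]) (use q in auto)
    also have "\<dots> = (C / (1 - norm q)^a) * (real n + 1)^(b+p+1) * norm q ^ n" by simp
    finally show ?thesis .
  qed
  moreover have "C / (1 - norm q)^a \<ge> 0" using C0 q by simp
  ultimately show ?case by blast
qed

lemma V_summable:
  assumes "valid L" "norm q < 1" "norm x \<le> 1"
  shows "summable (\<lambda>n. norm (VV q L n * x^n))"
proof -
  obtain C p where C0: "C \<ge> 0" and C: "\<And>n. norm (VV q L n) \<le> C * (real n + 1)^p * norm q ^ n"
    using V_bound[OF assms(1,2)] by blast
  have "summable (\<lambda>n. C * ((real n + 1)^p * norm q ^ n))"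
    by (intro summable_mult poly_geom) (use assms in auto)
  then show ?thesis
  proof (rule summable_comparison_test[rotated], intro exI[of _ 0] allI impI)
    fix n
    have "norm x ^ n \<le> 1" using assms by (simp add: power_le_one)
    then have "norm (VV q L n) * norm x ^ n \<le> norm (VV q L n) * 1" by (intro mult_left_mono) auto
    then show "norm (norm (VV q L n * x^n)) \<le> C * ((real n + 1)^p * norm q ^ n)"
      using C[of n] by (simp add: norm_mult norm_power mult.assoc)
  qed
qed

definition gg :: "complex \<Rightarrow> (nat \<times> nat) list \<Rightarrow> nat \<Rightarrow> complex" where
  "gg q L s = (\<Sum>n. VV q L n * (q^s)^n)"

lemma gg_bound:
  assumes "valid L" "norm q < 1"
  shows "norm (gg q L s) \<le> (\<Sum>n. norm (VV q L n))"
proof -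
  have x: "norm (q^s) \<le> 1" using assms by (simp add: norm_power power_le_one)
  have s1: "summable (\<lambda>n. norm (VV q L n * (q^s)^n))" by (rule V_summable[OF assms x])
  have s2: "summable (\<lambda>n. norm (VV q L n))" using V_summable[OF assms, of 1] by simp
  have "norm (gg q L s) \<le> (\<Sum>n. norm (VV q L n * (q^s)^n))"
    unfolding gg_def by (rule summable_norm[OF s1])
  also have "\<dots> \<le> (\<Sum>n. norm (VV q L n))"
  proof (rule suminf_le[OF _ s1 s2])
    fix n
    have "norm ((q^s)^n) \<le> 1" using x by (simp add: norm_power power_le_one)
    then show "norm (VV q L n * (q^s)^n) \<le> norm (VV q L n)"
      by (simp add: norm_mult mult_left_le)
  qed
  finally show ?thesis .
qed



lemma V_poly:
  assumes "valid L" "norm q < 1"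
  shows "\<exists>C p. C \<ge> 0 \<and> (\<forall>n. norm (VV q L n) \<le> C * (real n + 1)^p)"
proof -
  obtain C p where C0: "C \<ge> 0" and C: "\<And>n. norm (VV q L n) \<le> C * (real n + 1)^p * norm q ^ n"
    using V_bound[OF assms] by blast
  have "norm (VV q L n) \<le> C * (real n + 1)^p" for n
  proof -
    have "norm q ^ n \<le> 1" using assms by (simp add: power_le_one)
    then have "C * (real n + 1)^p * norm q ^ n \<le> C * (real n + 1)^p * 1"
      using C0 by (intro mult_left_mono) auto
    then show ?thesis using C[of n] by simp
  qed
  with C0 show ?thesis by blast
qed

lemma pw: "(q^(s+m))^n = (q^s)^n * ((q::complex)^n)^m"
proof -
  have "(q^m)^n = (q^n)^m" by (metis mult.commute power_mult)
  then show ?thesis by (simp add: power_add power_mult_distrib)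
qed

lemma conv_power:
  fixes x :: complex
  shows "(\<Sum>i\<le>k. (f i * x^i) * (g (k-i) * x^(k-i))) = (\<Sum>i=0..k. f i * g (k-i)) * x^k"
  unfolding sum_distrib_right atLeast0AtMost
proof (rule sum.cong[OF refl])
  fix i assume "i \<in> {..k}"
  then have "x^i * x^(k-i) = x^k" by (simp flip: power_add)
  then show "(f i * x^i) * (g (k-i) * x^(k-i)) = f i * g (k-i) * x^k"
    by (metis mult.assoc mult.left_commute)
qed

lemma R1:
  assumes q: "norm q < 1" and v: "valid ((a,b)#L)"
  shows "(\<lambda>m. YY a m * cc q (s+m)^b * gg q L (s+m)) sums gg q ((a,b)#L) s"
proof -
  from v have a: "1 \<le> a" and b: "1 \<le> b" and vL: "valid L" by (auto simp: valid_cons)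
  define W where "W n = (\<Sum>i=0..n. YY b i * VV q L (n-i))" for n
  have W0: "W 0 = 0" using YY_0[OF b] by (simp add: W_def)
  have VW: "VV q ((a,b)#L) n = cc q n ^ a * W n" for n
    unfolding W_def by (rule V_cons[OF b q])
  obtain C p where C0: "C \<ge> 0" and C: "\<And>n. norm (VV q L n) \<le> C * (real n + 1)^p"
    using V_poly[OF vL q] by blast
  have Wb: "norm (W n) \<le> C * (real n + 1)^(b+p+1)" for n
    using conv_bound[of "YY b" 1 b "VV q L" C p n] YY_bound C by (simp add: W_def)
  define F where "F = (\<lambda>(n,m). YY a m * (q^(s+m))^n * W n)"
  define \<rho> where "\<rho> = sqrt (norm q)"
  have \<rho>0: "0 \<le> \<rho>" and \<rho>1: "\<rho> < 1" and \<rho>2: "\<rho>^2 = norm q"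
    using q by (auto simp: \<rho>_def)
  have bound: "norm (F (n,m)) \<le> (C * ((real n + 1)^(b+p+1) * \<rho>^n)) * ((real m + 1)^a * \<rho>^m)" for n m
  proof (cases "n = 0 \<or> m = 0")
    case True
    then have "F (n,m) = 0" using W0 YY_0[OF a] by (auto simp: F_def)
    then show ?thesis using C0 \<rho>0 by simp
  next
    case False
    have "norm ((q^(s+m))^n) = norm q ^ ((s+m)*n)" by (simp add: norm_power power_mult)
    also have "\<dots> \<le> norm q ^ (m*n)"
      by (rule power_decreasing) (use q in auto)
    also have "\<dots> = \<rho> ^ (2*(m*n))" by (simp add: power_mult \<rho>2)
    also have "\<dots> \<le> \<rho> ^ (m+n)"
    proof (rule power_decreasing)
      have "n \<le> m*n" "m \<le> m*n" using False by auto
      then show "m + n \<le> 2*(m*n)" by linarith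
    qed (use \<rho>0 \<rho>1 in auto)
    also have "\<dots> = \<rho>^n * \<rho>^m" by (simp add: power_add mult.commute)
    finally have e: "norm ((q^(s+m))^n) \<le> \<rho>^n * \<rho>^m" .
    have "norm (F (n,m)) = norm (YY a m) * norm ((q^(s+m))^n) * norm (W n)"
      by (simp add: F_def norm_mult)
    also have "\<dots> \<le> (real m + 1)^a * (\<rho>^n * \<rho>^m) * (C * (real n + 1)^(b+p+1))"
      by (intro mult_mono YY_bound e Wb) (use \<rho>0 in auto)
    also have "\<dots> = (C * ((real n + 1)^(b+p+1) * \<rho>^n)) * ((real m + 1)^a * \<rho>^m)"
      by (simp add: mult_ac)
    finally show ?thesis .
  qed
  have Fs: "F summable_on UNIV"
  proof (rule prod_summable[where A="\<lambda>n. C * ((real n + 1)^(b+p+1) * \<rho>^n)" and B="\<lambda>m. (real m + 1)^a * \<rho>^m", OF bound])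
    show "summable (\<lambda>n. C * ((real n + 1)^(b+p+1) * \<rho>^n))"
      by (rule summable_mult[OF poly_geom]) (use \<rho>0 \<rho>1 in auto)
    show "summable (\<lambda>m. (real m + 1)^a * \<rho>^m)"
      by (rule poly_geom) (use \<rho>0 \<rho>1 in auto)
  qed (use \<rho>0 C0 in auto)
  have rows: "(\<lambda>m. F (n,m)) sums (VV q ((a,b)#L) n * (q^s)^n)" for n
  proof (cases "n = 0")
    case True
    then show ?thesis using W0 unfolding VW by (simp add: F_def)
  next
    case False
    have x: "norm (q^n) < 1" using normq_pow_lt[OF q, of n] False by simp
    have "(\<lambda>m. YY a m * (q^n)^m * ((q^s)^n * W n)) sums ((q^n/(1-q^n))^a * ((q^s)^n * W n))"
      by (rule sums_mult2[OF Y_eval[OF x]])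
    then show ?thesis unfolding VW by (simp add: F_def pw cc_def mult_ac)
  qed
  have cols: "(\<lambda>n. F (n,m)) sums (YY a m * cc q (s+m)^b * gg q L (s+m))" for m
  proof (cases "m = 0")
    case True
    have y0: "(\<lambda>n. YY a 0 * (q ^ s) ^ n * W n) = (\<lambda>n. 0)"
      by (simp only: YY_0[OF a] mult_zero_left)
    show ?thesis unfolding F_def True by (simp only: YY_0[OF a] mult_zero_left case_prod_conv sums_zero)
  next
    case False
    define x where "x = q^(s+m)"
    have x: "norm x < 1" using normq_pow_lt[OF q, of "s+m"] False by (simp add: x_def)
    have c: "(\<lambda>k. \<Sum>i\<le>k. (YY b i * x^i) * (VV q L (k-i) * x^(k-i))) sums
      ((\<Sum>k. YY b k * x^k) * (\<Sum>k. VV q L k * x^k))"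
      by (rule Cauchy_product_sums[OF YY_summable[OF x] V_summable[OF vL q]]) (use x in simp)
    have i1: "(\<Sum>k. YY b k * x^k) = cc q (s+m)^b"
      using sums_unique[OF Y_eval[OF x]] by (simp add: cc_def x_def)
    have i2: "(\<Sum>k. VV q L k * x^k) = gg q L (s+m)" by (simp add: gg_def x_def)
    have "(\<lambda>k. W k * x^k) sums (cc q (s+m)^b * gg q L (s+m))"
      using c unfolding conv_power i1 i2 W_def .
    from sums_mult[OF this, of "YY a m"] show ?thesis
      by (simp add: F_def x_def mult_ac)
  qed
  have "(\<lambda>n. VV q ((a,b)#L) n * (q^s)^n) sums infsum F UNIV"
    by (rule rows_sums[OF Fs rows])
  then have g: "gg q ((a,b)#L) s = infsum F UNIV" by (simp add: gg_def sums_iff)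
  show ?thesis unfolding g by (rule cols_sums[OF Fs cols])
qed



lemma gg_Nil: "gg q [] n = 1"
proof -
  have "(\<lambda>k. VV q [] k * (q^n)^k) = (\<lambda>k. if k = 0 then 1 else 0)" by (auto simp: fun_eq_iff)
  then show ?thesis using sums_unique[OF sums_single[of 0 "\<lambda>_. 1::complex"]] by (simp add: gg_def)
qed

lemma valid_sum_nonneg: "valid L \<Longrightarrow> norm q < 1 \<Longrightarrow> 0 \<le> (\<Sum>n. norm (VV q L n))"
  by (rule suminf_nonneg) (use V_summable[of L q 1] in auto)
  
lemma R2:
  assumes q: "norm q < 1"
  shows "valid L \<Longrightarrow> valid N \<Longrightarrow>
    (\<lambda>n. gg q L n * VV q N n) sums eval_at_1 (nestR q (rev (map (\<lambda>(x,y). (y,x)) L) @ N))"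
proof (induction L arbitrary: N)
  case Nil
  have "summable (\<lambda>n. norm (VV q N n))" using V_summable[OF Nil(2) q, of 1] by simp
  then have "(\<lambda>n. VV q N n) sums eval_at_1 (nestR q N)"
    unfolding eval_at_1_def by (rule summable_sums[OF summable_norm_cancel])
  then show ?case by (simp add: gg_Nil)
next
  case (Cons ab L)
  obtain a b where ab: "ab = (a,b)" by force
  with Cons.prems have a: "1 \<le> a" and b: "1 \<le> b" and vL: "valid L" and vN: "valid N"
    by (auto simp: valid_cons)
  have vN': "valid ((b,a)#N)" using a b vN by (simp add: valid_cons)
  define E where "E = eval_at_1 (nestR q (rev (map (\<lambda>(x,y). (y,x)) (ab#L)) @ N))"
  have IH: "(\<lambda>n. gg q L n * VV q ((b,a)#N) n) sums E"
    using Cons.IH[OF vL vN'] by (simp add: E_def ab)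
  define G where "G = (\<Sum>n. norm (VV q L n))"
  have G0: "0 \<le> G" unfolding G_def by (rule valid_sum_nonneg[OF vL q])
  obtain C p where C0: "C \<ge> 0" and C: "\<And>n. norm (VV q N n) \<le> C * (real n + 1)^p"
    using V_poly[OF vN q] by blast
  define F where "F = (\<lambda>(k,m). VV q N k * YY a m * cc q (k+m)^b * gg q L (k+m))"
  let ?r = "norm q"
  have r1: "0 < 1 - ?r" using q by simp
  have bound: "norm (F (k,m)) \<le> (C * ((real k + 1)^p * ?r^k)) * (G / (1 - ?r)^b * ((real m + 1)^a * ?r^m))" for k m
  proof -
    have "norm (F (k,m)) = norm (VV q N k) * norm (YY a m) * norm (cc q (k+m)^b) * norm (gg q L (k+m))"
      by (simp add: F_def norm_mult)
    also have "\<dots> \<le> (C * (real k + 1)^p) * (real m + 1)^a * (?r^(k+m) / (1 - ?r)^b) * G"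
      by (intro mult_mono C YY_bound cc_bound[OF b q]) (use gg_bound[OF vL q] C0 r1 in \<open>auto simp: G_def\<close>)
    also have "\<dots> = (C * ((real k + 1)^p * ?r^k)) * (G / (1 - ?r)^b * ((real m + 1)^a * ?r^m))"
      by (simp add: power_add field_simps)
    finally show ?thesis .
  qed
  have Fs: "F summable_on UNIV"
  proof (rule prod_summable[where A="\<lambda>k. C * ((real k + 1)^p * ?r^k)"
        and B="\<lambda>m. G / (1 - ?r)^b * ((real m + 1)^a * ?r^m)", OF bound])
    show "summable (\<lambda>k. C * ((real k + 1)^p * ?r^k))"
      by (rule summable_mult[OF poly_geom]) (use q in auto)
    show "summable (\<lambda>m. G / (1 - ?r)^b * ((real m + 1)^a * ?r^m))"
      by (rule summable_mult[OF poly_geom]) (use q in auto)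
  qed (use C0 G0 r1 in auto)
  have diag: "(\<Sum>m\<le>n. F (n-m, m)) = gg q L n * VV q ((b,a)#N) n" for n
  proof -
    have "(\<Sum>m\<le>n. F (n-m, m)) = (\<Sum>m\<le>n. gg q L n * (cc q n ^ b * (YY a m * VV q N (n-m))))"
      by (rule sum.cong) (auto simp: F_def mult_ac)
    also have "\<dots> = gg q L n * (cc q n ^ b * (\<Sum>i=0..n. YY a i * VV q N (n-i)))"
      by (simp add: sum_distrib_left atLeast0AtMost)
    also have "\<dots> = gg q L n * VV q ((b,a)#N) n" by (simp only: V_cons[OF a q])
    finally show ?thesis .
  qed
  have "(\<lambda>n. gg q L n * VV q ((b,a)#N) n) sums infsum F UNIV"
    using diag_sums[OF Fs] unfolding diag .
  then have FE: "infsum F UNIV = E" using IH sums_unique2 by blast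
  have rows: "(\<lambda>m. F (k,m)) sums (VV q N k * gg q ((a,b)#L) k)" for k
    using sums_mult[OF R1[OF q Cons.prems(1)[unfolded ab], of k], of "VV q N k"]
    by (simp add: F_def mult_ac)
  have "(\<lambda>k. VV q N k * gg q ((a,b)#L) k) sums E"
    using rows_sums[OF Fs rows] FE by simp
  then show ?case by (simp add: ab mult.commute E_def)
qed

theorem corollary3p4:
  fixes l :: nat and \<alpha>s \<beta>s :: "nat list" and q :: complex
  assumes "l \<ge> 1" and "length \<alpha>s = l" and "length \<beta>s = l"
    and "\<forall>j\<in>set \<alpha>s. j \<ge> 1" and "\<forall>j\<in>set \<beta>s. j \<ge> 1"
    and "norm q < 1"
  shows "summable (fps_nth (nestR q (zip \<alpha>s \<beta>s)))
       \<and> summable (fps_nth (nestR q (rev (zip \<beta>s \<alpha>s))))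
       \<and> eval_at_1 (nestR q (zip \<alpha>s \<beta>s)) = eval_at_1 (nestR q (rev (zip \<beta>s \<alpha>s)))"
proof -
  note q = assms(6)
  define L where "L = zip \<alpha>s \<beta>s"
  have vL: "valid L" using assms(4,5)
    by (auto simp: valid_def L_def dest: set_zip_leftD set_zip_rightD)
  have D: "rev (zip \<beta>s \<alpha>s) = rev (map (\<lambda>(x,y). (y,x)) L)"
    unfolding L_def by (subst zip_commute) simp
  have vD: "valid (rev (map (\<lambda>(x,y). (y,x)) L))" using vL by (auto simp: valid_def)
  have s1: "summable (VV q L)"
    using summable_norm_cancel[OF V_summable[OF vL q, of 1]] by simp
  have s2: "summable (VV q (rev (map (\<lambda>(x,y). (y,x)) L)))"
    using summable_norm_cancel[OF V_summable[OF vD q, of 1]] by simp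
  have r: "(\<lambda>n. gg q L n * VV q [] n) sums eval_at_1 (nestR q (rev (map (\<lambda>(x,y). (y,x)) L)))"
    using R2[OF q vL, of "[]"] by (simp add: valid_def)
  have "(\<lambda>n. gg q L n * VV q [] n) = (\<lambda>n. if n = 0 then gg q L 0 else 0)"
    by (auto simp: fun_eq_iff)
  then have "eval_at_1 (nestR q (rev (map (\<lambda>(x,y). (y,x)) L))) = gg q L 0"
    using r sums_single[of 0 "\<lambda>_. gg q L 0"] sums_unique2 by force
  also have "gg q L 0 = eval_at_1 (nestR q L)" by (simp add: gg_def eval_at_1_def)
  finally show ?thesis using s1 s2 D by (simp add: L_def)
qed


end
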